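(* Let $S$ be a quasi-tree of a map $\mathcal M$ and let $e$ be an edge of $\mathcal M$. If $e\in S$, then $\widetilde{\Lambda}(\mathcal M/ e, S\setminus \{e\})=\widetilde{\Lambda}(\mathcal M, S)- e$. If $e\notin S$, then $\widetilde{\Lambda}(\mathcal M\setminus e, S)=\widetilde{\Lambda}(\mathcal M, S)- e$.
   Context: A map is a triple $\mathcal M=(B,\sigma,\alpha)$ with $B$ finite, $\sigma,\alpha\in\mathrm{Sym}(B)$, $\alpha$ a fixed-point-free involution, $\langle\sigma,\alpha\rangle$ transitive on $B$; permutations compose as functions. Edges are the cycles of $\alpha$; $\underline b=\{b,\alpha(b)\}$. For $\mu\in\mathrm{Sym}(B)$, $B'\subseteq B$, $\mu_{|B'}(b)=\mu^k(b)$ with $k$ least positive such that $\mu^k(b)\in B'$. Deletion: $\mathcal M\setminus e=(B\setminus e,\sigma_{|B\setminus e},\alpha_{|B\setminus e})$; contraction: $\mathcal M/e=(B\setminus e,(\sigma\alpha)_{|B\setminus e}\alpha_{|B\setminus e},\alpha_{|B\setminus e})$. The tour of a set $F$ of edges is $\tau$ with $\tau(b)=\sigma(\alpha(b))$ if $\underline b\in F$ and $\tau(b)=\sigma(b)$ otherwise; a quasi-tree is a set of edges whose tour is a single cycle on the flag set. For a quasi-tree $S$ with tour $\tau$, $\widetilde\Lambda(\mathcal M,S)$ is the chord diagram with the flags placed on a circle in the cyclic order of $\tau$, a chord joining the two flags of each edge, chords of edges in $S$ colored $1$ and the others colored $2$. $\widetilde\Lambda(\mathcal M,S)-e$ denotes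 the bicolored chord diagram with the chord of $e$ removed. *)

theory Defs
  imports "HOL-Combinatorics.Permutations"
begin

text \<open>Permutations are total functions
  that are bijections of B and the identity outside B ('permutes').\<close>

definition is_map :: "'b set \<Rightarrow> ('b \<Rightarrow> 'b) \<Rightarrow> ('b \<Rightarrow> 'b) \<Rightarrow> bool" where
  "is_map B \<sigma> \<alpha> \<longleftrightarrow> finite B \<and> \<sigma> permutes B \<and> \<alpha> permutes B
     \<and> (\<forall>b\<in>B. \<alpha> b \<noteq> b \<and> \<alpha> (\<alpha> b) = b)
     \<and> (\<forall>b\<in>B. \<forall>c\<in>B. (b, c) \<in> {(x, y). y = \<sigma> x \<or> y = \<alpha> x}\<^sup>*)"

definition edge_of :: "('b \<Rightarrow> 'b) \<Rightarrow> 'b \<Rightarrow> 'b set" where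
  "edge_of \<alpha> b = {b, \<alpha> b}"

definition edges :: "'b set \<Rightarrow> ('b \<Rightarrow> 'b) \<Rightarrow> 'b set set" where
  "edges B \<alpha> = edge_of \<alpha> ` B"

definition restr_perm :: "('b \<Rightarrow> 'b) \<Rightarrow> 'b set \<Rightarrow> 'b \<Rightarrow> 'b" where
  "restr_perm \<mu> B' b =
     (if b \<in> B' then (\<mu> ^^ (LEAST k. 0 < k \<and> (\<mu> ^^ k) b \<in> B')) b else b)"

definition delete_edge :: "'b set \<Rightarrow> ('b \<Rightarrow> 'b) \<Rightarrow> ('b \<Rightarrow> 'b) \<Rightarrow> 'b set
    \<Rightarrow> 'b set \<times> ('b \<Rightarrow> 'b) \<times> ('b \<Rightarrow> 'b)" where
  "delete_edge B \<sigma> \<alpha> e = (B - e, restr_perm \<sigma> (B - e), restr_perm \<alpha> (B - e))"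

definition contract_edge :: "'b set \<Rightarrow> ('b \<Rightarrow> 'b) \<Rightarrow> ('b \<Rightarrow> 'b) \<Rightarrow> 'b set
    \<Rightarrow> 'b set \<times> ('b \<Rightarrow> 'b) \<times> ('b \<Rightarrow> 'b)" where
  "contract_edge B \<sigma> \<alpha> e =
     (B - e, restr_perm (\<sigma> \<circ> \<alpha>) (B - e) \<circ> restr_perm \<alpha> (B - e), restr_perm \<alpha> (B - e))"

definition tour :: "'b set \<Rightarrow> ('b \<Rightarrow> 'b) \<Rightarrow> ('b \<Rightarrow> 'b) \<Rightarrow> 'b set set \<Rightarrow> 'b \<Rightarrow> 'b" where
  "tour B \<sigma> \<alpha> F b =
     (if b \<in> B then (if edge_of \<alpha> b \<in> F then \<sigma> (\<alpha> b) else \<sigma> b) else b)"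

definition quasi_tree :: "'b set \<Rightarrow> ('b \<Rightarrow> 'b) \<Rightarrow> ('b \<Rightarrow> 'b) \<Rightarrow> 'b set set \<Rightarrow> bool" where
  "quasi_tree B \<sigma> \<alpha> S \<longleftrightarrow> S \<subseteq> edges B \<alpha>
     \<and> (\<forall>b\<in>B. \<forall>c\<in>B. \<exists>n. (tour B \<sigma> \<alpha> S ^^ n) b = c)"

text \<open>A (labelled) bicolored chord diagram: a set of points on a circle, the cyclic
  successor of each point on the circle, the chord involution pairing the endpoints
  of each chord, and the colour of the chord at each point. All components are
  normalised outside the point set so that HOL equality is equality of diagrams.\<close>
type_synonym 'b chord_diagram = "'b set \<times> ('b \<Rightarrow> 'b) \<times> ('b \<Rightarrow> 'b) \<times> ('b \<Rightarrow> nat)"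

definition mk_diagram :: "'b set \<Rightarrow> ('b \<Rightarrow> 'b) \<Rightarrow> ('b \<Rightarrow> 'b) \<Rightarrow> ('b \<Rightarrow> nat) \<Rightarrow> 'b chord_diagram" where
  "mk_diagram P succ ch col =
     (P, (\<lambda>b. if b \<in> P then succ b else b), (\<lambda>b. if b \<in> P then ch b else b),
      (\<lambda>b. if b \<in> P then col b else 0))"

definition Lambda :: "'b set \<Rightarrow> ('b \<Rightarrow> 'b) \<Rightarrow> ('b \<Rightarrow> 'b) \<Rightarrow> 'b set set \<Rightarrow> 'b chord_diagram" where
  "Lambda B \<sigma> \<alpha> S =
     mk_diagram B (tour B \<sigma> \<alpha> S) \<alpha> (\<lambda>b. if edge_of \<alpha> b \<in> S then 1 else 2)"

definition remove_chord :: "'b chord_diagram \<Rightarrow> 'b set \<Rightarrow> 'b chord_diagram" where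
  "remove_chord D e = (case D of (P, succ, ch, col) \<Rightarrow>
     mk_diagram (P - e) (restr_perm succ (P - e)) ch col)"

end

theory Submission
  imports Defs "HOL-Combinatorics.Cycles"
begin

lemma funpow_in_perm:
  assumes "\<mu> permutes B" "c \<in> B" shows "(\<mu> ^^ n) c \<in> B"
  using assms by (induction n) (auto simp: permutes_in_image)

lemma restr_exists:
  assumes "\<mu> permutes B" "finite B" "c \<in> B'"
  shows "\<exists>k. 0 < k \<and> (\<mu> ^^ k) c \<in> B'"
proof -
  have "permutation \<mu>" using assms permutation_permutes by blast
  then obtain n where "\<mu> ^^ n = id" "n > 0" by (rule permutation_is_nilpotent)
  thus ?thesis using assms(3) by (intro exI[of _ n]) simp
qed

lemma restr_chain:
  assumes mu: "\<mu> permutes B" and fin: "finite B" and c: "c \<in> B - e" and b: "b \<in> B - e"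
    and tb: "\<tau> b = \<mu> c" and eq: "\<And>x. x \<in> e \<Longrightarrow> \<tau> x = \<mu> x"
  shows "restr_perm \<tau> (B - e) b = restr_perm \<mu> (B - e) c"
proof -
  let ?P = "\<lambda>k. 0 < k \<and> (\<mu> ^^ k) c \<in> B - e"
  let ?Q = "\<lambda>k. 0 < k \<and> (\<tau> ^^ k) b \<in> B - e"
  have ex: "\<exists>k. ?P k" using restr_exists[OF mu fin c] .
  define k0 where "k0 = (LEAST k. ?P k)"
  have Pk0: "?P k0" unfolding k0_def using LeastI_ex[OF ex] .
  have nP: "\<not> ?P j" if "j < k0" for j using not_less_Least[of j ?P] that unfolding k0_def by blast
  have cB: "c \<in> B" using c by blast
  have chain: "\<forall>j. 0 < j \<and> j < n \<longrightarrow> (\<mu> ^^ j) c \<notin> B - e \<Longrightarrow> 0 < n \<Longrightarrow> (\<tau> ^^ n) b = (\<mu> ^^ n) c" for n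
  proof (induction n)
    case 0 then show ?case by simp
  next
    case (Suc n)
    show ?case
    proof (cases "n = 0")
      case True then show ?thesis using tb by simp
    next
      case False
      have IH: "(\<tau> ^^ n) b = (\<mu> ^^ n) c" using Suc False by auto
      have "(\<mu> ^^ n) c \<notin> B - e" using Suc.prems False by auto
      moreover have "(\<mu> ^^ n) c \<in> B" using funpow_in_perm[OF mu cB] .
      ultimately have "(\<mu> ^^ n) c \<in> e" by blast
      then show ?thesis using IH eq by simp
    qed
  qed
  have nP': "(\<mu> ^^ j) c \<notin> B - e" if "0 < j" "j < k0" for j using nP[of j] that by blast
  have tk: "(\<tau> ^^ j) b = (\<mu> ^^ j) c" if "0 < j" "j \<le> k0" for j
    by (rule chain) (use that nP' in auto)
  have "(LEAST k. ?Q k) = k0"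
  proof (rule Least_equality)
    show "?Q k0" using tk[of k0] Pk0 by auto
    show "k0 \<le> y" if "?Q y" for y
    proof (rule ccontr)
      assume "\<not> k0 \<le> y"
      then have "y < k0" by simp
      then show False using tk[of y] nP[of y] that by auto
    qed
  qed
  then show ?thesis unfolding restr_perm_def using b c tk[of k0] Pk0 k0_def by auto
qed

lemma restr_alpha:
  assumes "\<forall>b\<in>B. \<alpha> b \<noteq> b \<and> \<alpha> (\<alpha> b) = b" "\<alpha> permutes B" "e = {a, \<alpha> a}" "x \<in> B - e" and aB: "a \<in> B"
  shows "restr_perm \<alpha> (B - e) x = \<alpha> x"
proof -
  have xB: "x \<in> B" "x \<noteq> a" "x \<noteq> \<alpha> a" using assms(3,4) by auto
  have "\<alpha> x \<noteq> a" using xB assms(1) by metis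
  moreover have "\<alpha> x \<noteq> \<alpha> a" using xB assms(1) aB by metis
  moreover have "\<alpha> x \<in> B" using xB assms(2) by (simp add: permutes_in_image)
  ultimately have ax: "\<alpha> x \<in> B - e" using assms(3) by auto
  have "(LEAST k. 0 < k \<and> (\<alpha> ^^ k) x \<in> B - e) = 1"
    by (rule Least_equality) (use ax in auto)
  then show ?thesis unfolding restr_perm_def using assms(4) by simp
qed

theorem lemma10:
  fixes B :: "'b set" and \<sigma> \<alpha> :: "'b \<Rightarrow> 'b" and S :: "'b set set" and e :: "'b set"
  assumes "is_map B \<sigma> \<alpha>"
    and "quasi_tree B \<sigma> \<alpha> S"
    and "e \<in> edges B \<alpha>"
  shows "(e \<in> S \<longrightarrow>
            (case contract_edge B \<sigma> \<alpha> e of (B', \<sigma>', \<alpha>') \<Rightarrow> Lambda B' \<sigma>' \<alpha>' (S - {e}))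
              = remove_chord (Lambda B \<sigma> \<alpha> S) e)
       \<and> (e \<notin> S \<longrightarrow>
            (case delete_edge B \<sigma> \<alpha> e of (B', \<sigma>', \<alpha>') \<Rightarrow> Lambda B' \<sigma>' \<alpha>' S)
              = remove_chord (Lambda B \<sigma> \<alpha> S) e)"
proof -
  have fin: "finite B" and sp: "\<sigma> permutes B" and ap: "\<alpha> permutes B"
    and inv: "\<forall>b\<in>B. \<alpha> b \<noteq> b \<and> \<alpha> (\<alpha> b) = b"
    using assms(1) unfolding is_map_def by auto
  obtain a where aB: "a \<in> B" and ea: "e = {a, \<alpha> a}"
    using assms(3) unfolding edges_def edge_of_def by auto
  let ?\<tau> = "tour B \<sigma> \<alpha> S"
  have ra: "restr_perm \<alpha> (B - e) x = \<alpha> x" if "x \<in> B - e" for x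
    using restr_alpha[OF inv ap ea that aB] .
  have axB: "\<alpha> x \<in> B - e" if "x \<in> B - e" for x
  proof -
    have "restr_perm \<alpha> (B - e) x = \<alpha> x" using ra[OF that] .
    have "(\<alpha> ^^ (LEAST k. 0 < k \<and> (\<alpha> ^^ k) x \<in> B - e)) x \<in> B - e"
      using LeastI_ex[OF restr_exists[OF ap fin that]] by blast
    then show ?thesis using ra[OF that] that unfolding restr_perm_def by simp
  qed
  have ee: "edge_of \<alpha> x = e" if "x \<in> e" for x
    using that ea inv aB unfolding edge_of_def by auto
  have ene: "edge_of \<alpha> x \<noteq> e" if "x \<in> B - e" for x
    using that unfolding edge_of_def by auto
  have eB: "e \<subseteq> B" using ea aB ap by (auto simp: permutes_in_image)
  have eda: "edge_of (restr_perm \<alpha> (B - e)) x = edge_of \<alpha> x" if "x \<in> B - e" for x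
    using ra[OF that] unfolding edge_of_def by simp
  have aa: "\<alpha> (\<alpha> x) = x" if "x \<in> B - e" for x using that inv by auto
  have tid: "(\<lambda>b. if b \<in> B then ?\<tau> b else b) = ?\<tau>"
    by (auto simp: fun_eq_iff tour_def)
  have cmp: "(\<sigma> \<circ> \<alpha>) permutes B" using permutes_compose[OF ap sp] .
  show ?thesis
  proof (intro conjI impI)
    assume eS: "e \<in> S"
    let ?\<sigma>' = "restr_perm (\<sigma> \<circ> \<alpha>) (B - e) \<circ> restr_perm \<alpha> (B - e)"
    have tk: "tour (B - e) ?\<sigma>' (restr_perm \<alpha> (B - e)) (S - {e}) x = restr_perm ?\<tau> (B - e) x"
      if x: "x \<in> B - e" for x
    proof -
      have eqe: "?\<tau> y = (\<sigma> \<circ> \<alpha>) y" if "y \<in> e" for y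
        using that ee eS eB unfolding tour_def by auto
      show ?thesis
      proof (cases "edge_of \<alpha> x \<in> S")
        case True
        have "restr_perm ?\<tau> (B - e) x = restr_perm (\<sigma> \<circ> \<alpha>) (B - e) x"
          by (rule restr_chain[OF cmp fin x x]) (use True x eqe in \<open>auto simp: tour_def\<close>)
        moreover have "edge_of \<alpha> x \<in> S - {e}" using True ene[OF x] by simp
        ultimately show ?thesis using x ra[OF x] ra[OF axB[OF x]] aa[OF x] eda[OF x] unfolding tour_def by simp
      next
        case False
        have "restr_perm ?\<tau> (B - e) x = restr_perm (\<sigma> \<circ> \<alpha>) (B - e) (\<alpha> x)"
          by (rule restr_chain[OF cmp fin axB[OF x] x]) (use False x eqe inv in \<open>auto simp: tour_def\<close>)
        then show ?thesis using False x ra[OF x] eda[OF x] unfolding tour_def by simp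
      qed
    qed
    show "(case contract_edge B \<sigma> \<alpha> e of (B', \<sigma>', \<alpha>') \<Rightarrow> Lambda B' \<sigma>' \<alpha>' (S - {e}))
              = remove_chord (Lambda B \<sigma> \<alpha> S) e"
      unfolding contract_edge_def Lambda_def remove_chord_def mk_diagram_def
      unfolding tid prod.case prod.inject
      apply (intro conjI refl ext)
      subgoal for x using tk[of x] by simp
      subgoal for x using ra[of x] by simp
      subgoal for x using eda[of x] ene[of x] by simp
      done
  next
    assume eS: "e \<notin> S"
    have tk: "tour (B - e) (restr_perm \<sigma> (B - e)) (restr_perm \<alpha> (B - e)) S x = restr_perm ?\<tau> (B - e) x"
      if x: "x \<in> B - e" for x
    proof -
      have eqe: "?\<tau> y = \<sigma> y" if "y \<in> e" for y
        using that ee eS eB unfolding tour_def by auto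
      show ?thesis
      proof (cases "edge_of \<alpha> x \<in> S")
        case True
        have "restr_perm ?\<tau> (B - e) x = restr_perm \<sigma> (B - e) (\<alpha> x)"
          by (rule restr_chain[OF sp fin axB[OF x] x]) (use True x eqe in \<open>auto simp: tour_def\<close>)
        then show ?thesis using True x ra[OF x] eda[OF x] unfolding tour_def by simp
      next
        case False
        have "restr_perm ?\<tau> (B - e) x = restr_perm \<sigma> (B - e) x"
          by (rule restr_chain[OF sp fin x x]) (use False x eqe in \<open>auto simp: tour_def\<close>)
        then show ?thesis using False x eda[OF x] unfolding tour_def by simp
      qed
    qed
    show "(case delete_edge B \<sigma> \<alpha> e of (B', \<sigma>', \<alpha>') \<Rightarrow> Lambda B' \<sigma>' \<alpha>' S)
              = remove_chord (Lambda B \<sigma> \<alpha> S) e"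
      unfolding delete_edge_def Lambda_def remove_chord_def mk_diagram_def
      unfolding tid prod.case prod.inject
      apply (intro conjI refl ext)
      subgoal for x using tk[of x] by simp
      subgoal for x using ra[of x] by simp
      subgoal for x using eda[of x] by simp
      done
  qed
qed

end
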